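(* Let $k \geq 1$ and let $\{b_j, b_j^\perp\}$, $j = 0,1,\ldots,2k+1$, be orthonormal bases of $\mathbb{C}^2$ (so $\langle b_j, b_j^\perp\rangle = 0$) such that for all $i \neq j$ the quantities $|\langle b_i,b_j\rangle|$, $|\langle b_i,b_j^\perp\rangle|$, $|\langle b_i^\perp,b_j\rangle|$, $|\langle b_i^\perp,b_j^\perp\rangle|$ all lie outside $\{0,1\}$. For $0 \leq j \leq k$ define vectors in $\mathbb{C}^2\otimes\mathbb{C}^2$: $$v_{2j} := b_j \otimes b_{2j}^\perp,\quad v_{2j+1} := b_j^\perp \otimes b_{(2j+2) \bmod (2k+2)},\quad w_{2j} := b_j^\perp \otimes b_{2j+1}^\perp,\quad w_{2j+1} := b_j \otimes b_{(2j+3) \bmod (2k+2)}.$$ Then: (a) the orthogonality graph of $\{v_0,\ldots,v_{2k+1},w_0,\ldots,w_{2k+1}\}$ is the prism graph $Y_{4k+4}$, i.e. $v_i$ and $v_j$ (respectively $w_i$ and $w_j$) are orthogonal iff $j - i \equiv \pm 1 \pmod{2k+2}$, and $v_i$ and $w_j$ are orthogonal iff $i = j$; (b) every nonzero product vector $x \otimes y \in \mathbb{C}^2\otimes\mathbb{C}^2$ is orthogonal to at most $3$ of the $4k+4$ vectors $v_0,\ldots,v_{2k+1},w_0,\ldots,w_{2k+1}$.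
   Context: The orthogonality graph of a finite list of vectors is the simple graph whose vertices are the vectors and in which two distinct vertices are adjacent iff the corresponding vectors are orthogonal. For product vectors, $x_1\otimes x_2$ and $y_1\otimes y_2$ are orthogonal iff $\langle x_1,y_1\rangle = 0$ or $\langle x_2,y_2\rangle = 0$. *)

theory Defs
  imports "HOL-Analysis.Analysis"
begin

text \<open>Vectors of C^2 are modelled as complex^2; vectors of C^2 (x) C^2 as complex^2^2
  (coefficient array with respect to the standard product basis).\<close>

definition cinner2 :: "complex^2 \<Rightarrow> complex^2 \<Rightarrow> complex" where
  "cinner2 x y = (\<Sum>i\<in>UNIV. cnj (x $ i) * y $ i)"

definition tensor :: "complex^2 \<Rightarrow> complex^2 \<Rightarrow> complex^2^2" where
  "tensor x y = (\<chi> i j. x $ i * y $ j)"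

definition cinner4 :: "complex^2^2 \<Rightarrow> complex^2^2 \<Rightarrow> complex" where
  "cinner4 a c = (\<Sum>i\<in>UNIV. \<Sum>j\<in>UNIV. cnj (a $ i $ j) * c $ i $ j)"

definition orth4 :: "complex^2^2 \<Rightarrow> complex^2^2 \<Rightarrow> bool" where
  "orth4 a c \<longleftrightarrow> cinner4 a c = 0"

definition vvec :: "nat \<Rightarrow> (nat \<Rightarrow> complex^2) \<Rightarrow> (nat \<Rightarrow> complex^2) \<Rightarrow> nat \<Rightarrow> complex^2^2" where
  "vvec k b bp i = (if even i then tensor (b (i div 2)) (bp i)
                    else tensor (bp (i div 2)) (b ((i + 1) mod (2*k+2))))"

definition wvec :: "nat \<Rightarrow> (nat \<Rightarrow> complex^2) \<Rightarrow> (nat \<Rightarrow> complex^2) \<Rightarrow> nat \<Rightarrow> complex^2^2" where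
  "wvec k b bp i = (if even i then tensor (bp (i div 2)) (bp (i + 1))
                    else tensor (b (i div 2)) (b ((i + 2) mod (2*k+2))))"

end

theory Submission imports Defs begin

lemma cinner2_exp: "cinner2 x y = cnj (x$1) * y$1 + cnj (x$2) * y$2"
  unfolding cinner2_def sum_2 by simp

lemma cinner4_tensor: "cinner4 (tensor a c) (tensor a' c') = cinner2 a a' * cinner2 c c'"
  unfolding cinner4_def tensor_def cinner2_exp sum_2 by (simp add: algebra_simps)

lemma orth_tt: "orth4 (tensor u1 u2) (tensor w1 w2) \<longleftrightarrow> cinner2 u1 w1 = 0 \<or> cinner2 u2 w2 = 0"
  unfolding orth4_def cinner4_tensor by simp

lemma cinner2_swap: "cinner2 w u = cnj (cinner2 u w)"
  unfolding cinner2_exp by simp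

lemma tensor_nz: "tensor x y \<noteq> 0 \<Longrightarrow> x \<noteq> 0 \<and> y \<noteq> 0"
  unfolding tensor_def by (auto simp: vec_eq_iff)

lemma lagrange:
  "cinner2 u w * cnj (cinner2 u w) + (u$1*w$2 - u$2*w$1) * cnj (u$1*w$2 - u$2*w$1)
   = cinner2 u u * cinner2 w w"
  unfolding cinner2_exp by (simp add: algebra_simps)

lemma uniq_core:
  assumes "x \<noteq> 0" "cinner2 x u = 0" "cinner2 x w = 0" "cinner2 u u = 1" "cinner2 w w = 1"
  shows "norm (cinner2 u w) = 1"
proof -
  define D where "D = u$1*w$2 - u$2*w$1"
  have e1: "cnj (x$1) * u$1 = - (cnj (x$2) * u$2)" using assms(2) unfolding cinner2_exp
    by (simp add: eq_neg_iff_add_eq_0)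
  have e2: "cnj (x$1) * w$1 = - (cnj (x$2) * w$2)" using assms(3) unfolding cinner2_exp
    by (simp add: eq_neg_iff_add_eq_0)
  have "cnj (x$1) * D = (cnj (x$1) * u$1) * w$2 - (cnj (x$1) * w$1) * u$2"
    unfolding D_def by (simp add: algebra_simps)
  also have "\<dots> = 0" unfolding e1 e2 by (simp add: algebra_simps)
  finally have h1: "cnj (x$1) * D = 0" .
  have f1: "cnj (x$2) * u$2 = - (cnj (x$1) * u$1)" using e1 by simp
  have f2: "cnj (x$2) * w$2 = - (cnj (x$1) * w$1)" using e2 by simp
  have "cnj (x$2) * D = (cnj (x$2) * w$2) * u$1 - (cnj (x$2) * u$2) * w$1"
    unfolding D_def by (simp add: algebra_simps)
  also have "\<dots> = 0" unfolding f1 f2 by (simp add: algebra_simps)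
  finally have h2: "cnj (x$2) * D = 0" .
  have "x$1 \<noteq> 0 \<or> x$2 \<noteq> 0" using assms(1) by (auto simp: vec_eq_iff forall_2)
  hence D0: "D = 0" using h1 h2 by auto
  have "cinner2 u w * cnj (cinner2 u w) = 1" using lagrange[of u w] assms(4,5) D0 unfolding D_def by simp
  hence "complex_of_real ((norm (cinner2 u w))^2) = 1" by (metis complex_norm_square)
  hence "(norm (cinner2 u w))^2 = 1" using of_real_eq_1_iff by blast
  thus ?thesis using norm_ge_zero[of "cinner2 u w"] by (smt (verit) power2_eq_1_iff)
qed

definition "SVf k i = (if even i then i else if i = 2*k+1 then 0 else i+1)" for k i :: nat
definition "SWf k i = (if even i then i+1 else if i \<ge> 2*k then i - 2*k else i+2)" for k i :: nat
definition "ADJ k i j \<longleftrightarrow> (j = i+1 \<or> i = j+1 \<or> (i=0 \<and> j=2*k+1) \<or> (j=0 \<and> i = 2*k+1))" for k i j :: nat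

lemma nat_par: obtains a where "(i::nat) = 2*a" | a where "i = 2*a+1" by (metis evenE oddE)

lemma arith1: fixes i j k :: nat assumes "i \<le> 2*k+1" "j \<le> 2*k+1" "k \<ge> 1"
  shows "((even i \<noteq> even j \<and> i div 2 = j div 2) \<or> (odd i \<noteq> odd j \<and> SVf k i = SVf k j)) \<longleftrightarrow> ADJ k i j"
  using assms by (cases i rule: nat_par; cases j rule: nat_par; auto simp: SVf_def ADJ_def; presburger)

lemma arith2: fixes i j k :: nat assumes "i \<le> 2*k+1" "j \<le> 2*k+1" "k \<ge> 1"
  shows "((odd i \<noteq> odd j \<and> i div 2 = j div 2) \<or> (odd i \<noteq> odd j \<and> SWf k i = SWf k j)) \<longleftrightarrow> ADJ k i j"
  using assms by (cases i rule: nat_par; cases j rule: nat_par; auto simp: SWf_def ADJ_def; presburger)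

lemma arith3: fixes i j k :: nat assumes "i \<le> 2*k+1" "j \<le> 2*k+1" "k \<ge> 1"
  shows "((even i \<noteq> odd j \<and> i div 2 = j div 2) \<or> (odd i \<noteq> odd j \<and> SVf k i = SWf k j)) \<longleftrightarrow> i = j"
  using assms by (cases i rule: nat_par; cases j rule: nat_par; auto simp: SVf_def SWf_def; presburger)

lemma arith4: fixes i j :: nat shows "even i = even j \<Longrightarrow> i div 2 = j div 2 \<Longrightarrow> i = j"
  by presburger

lemma arith5: fixes i j k :: nat assumes "i \<le> 2*k+1" "j \<le> 2*k+1"
  shows "odd i = odd j \<Longrightarrow> SVf k i = SVf k j \<Longrightarrow> i = j"
  using assms by (cases i rule: nat_par; cases j rule: nat_par; auto simp: SVf_def split: if_splits; presburger)

lemma arith6: fixes i j k :: nat assumes "i \<le> 2*k+1" "j \<le> 2*k+1"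
  shows "odd i = odd j \<Longrightarrow> SWf k i = SWf k j \<Longrightarrow> i = j"
  using assms by (cases i rule: nat_par; cases j rule: nat_par; auto simp: SWf_def split: if_splits; presburger)

lemma arith7: fixes i j k :: nat assumes "i \<le> 2*k+1" "j \<le> 2*k+1"
  shows "odd i = odd j \<Longrightarrow> SVf k i = SWf k j \<Longrightarrow> False"
  using assms by (cases i rule: nat_par; cases j rule: nat_par; auto simp: SVf_def SWf_def split: if_splits; presburger)

lemma mod_int_char:
  assumes "i \<le> 2*k+1" "j \<le> 2*k+1"
  shows "((int j - int i) mod (2*int k+2) \<in> {1, 2*int k+1}) \<longleftrightarrow> ADJ k i j"
proof (cases "i \<le> j")
  case True
  hence "(int j - int i) mod (2*int k+2) = int j - int i"
    using assms by (intro mod_pos_pos_trivial) auto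
  thus ?thesis using assms True unfolding ADJ_def by auto
next
  case False
  have "(int j - int i) mod (2*int k+2) = (int j - int i + (2*int k+2)) mod (2*int k+2)"
    by simp
  also have "\<dots> = int j - int i + (2*int k+2)"
    using assms False by (intro mod_pos_pos_trivial) auto
  finally show ?thesis using assms False unfolding ADJ_def by auto
qed

lemma mod1: "(i::nat) \<le> 2*k+1 \<Longrightarrow> (i+1) mod (2*k+2) = (if i = 2*k+1 then 0 else i+1)"
  by auto

lemma mod2: "(i::nat) \<le> 2*k+1 \<Longrightarrow> (i+2) mod (2*k+2) = (if i \<ge> 2*k then i - 2*k else i+2)"
proof (cases "i \<ge> 2*k")
  case True
  assume "i \<le> 2*k+1"
  hence "i + 2 = (i - 2*k) + (2*k+2)" using True by simp
  hence "(i+2) mod (2*k+2) = (i - 2*k) mod (2*k+2)" by (metis mod_add_self2)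
  also have "\<dots> = i - 2*k" using \<open>i \<le> 2*k+1\<close> by (intro mod_less) auto
  finally show ?thesis using True by simp
qed auto

theorem mainTheorem8:
  fixes k :: nat and b bp :: "nat \<Rightarrow> complex^2"
  assumes k: "k \<ge> 1"
    and onb: "\<And>j. j \<le> 2*k+1 \<Longrightarrow>
                cinner2 (b j) (b j) = 1 \<and> cinner2 (bp j) (bp j) = 1 \<and> cinner2 (b j) (bp j) = 0"
    and gen: "\<And>i j. i \<le> 2*k+1 \<Longrightarrow> j \<le> 2*k+1 \<Longrightarrow> i \<noteq> j \<Longrightarrow>
                norm (cinner2 (b i) (b j)) \<notin> {0, 1} \<and> norm (cinner2 (b i) (bp j)) \<notin> {0, 1} \<and>
                norm (cinner2 (bp i) (b j)) \<notin> {0, 1} \<and> norm (cinner2 (bp i) (bp j)) \<notin> {0, 1}"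
  shows "(\<forall>i j. i \<le> 2*k+1 \<longrightarrow> j \<le> 2*k+1 \<longrightarrow>
            (orth4 (vvec k b bp i) (vvec k b bp j) \<longleftrightarrow>
               (int j - int i) mod (2*int k+2) \<in> {1, 2*int k+1}) \<and>
            (orth4 (wvec k b bp i) (wvec k b bp j) \<longleftrightarrow>
               (int j - int i) mod (2*int k+2) \<in> {1, 2*int k+1}) \<and>
            (orth4 (vvec k b bp i) (wvec k b bp j) \<longleftrightarrow> i = j))
       \<and> (\<forall>x y. tensor x y \<noteq> 0 \<longrightarrow>
            card {i. i \<le> 2*k+1 \<and> orth4 (tensor x y) (vvec k b bp i)}
          + card {i. i \<le> 2*k+1 \<and> orth4 (tensor x y) (wvec k b bp i)} \<le> 3)"
proof -
  define N where "N = 2*k+2"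
  define bv where "bv s m = (if s then b m else bp m)" for s m
  define sv where "sv i = (if even i then i else (i+1) mod N)" for i
  define sw where "sw i = (if even i then i+1 else (i+2) mod N)" for i
  have unit: "\<And>s m. m \<le> 2*k+1 \<Longrightarrow> cinner2 (bv s m) (bv s m) = 1"
    using onb by (auto simp: bv_def)
  have Z: "\<And>s t m n. m \<le> 2*k+1 \<Longrightarrow> n \<le> 2*k+1 \<Longrightarrow>
      cinner2 (bv s m) (bv t n) = 0 \<longleftrightarrow> (s \<noteq> t \<and> m = n)"
  proof -
    fix s t m n assume mn: "m \<le> 2*k+1" "n \<le> 2*k+1"
    show "cinner2 (bv s m) (bv t n) = 0 \<longleftrightarrow> (s \<noteq> t \<and> m = n)"
    proof (cases "m = n")
      case True
      have "cinner2 (bp n) (b n) = 0" using onb[of n] mn cinner2_swap[of "bp n" "b n"] by simp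
      thus ?thesis using True onb[of n] mn by (auto simp: bv_def)
    next
      case False
      have "cinner2 (bv s m) (bv t n) \<noteq> 0"
        using gen[OF mn False] by (cases s; cases t) (auto simp: bv_def)
      thus ?thesis using False by simp
    qed
  qed
  have U: "\<And>x s t m n. x \<noteq> 0 \<Longrightarrow> m \<le> 2*k+1 \<Longrightarrow> n \<le> 2*k+1 \<Longrightarrow>
      cinner2 x (bv s m) = 0 \<Longrightarrow> cinner2 x (bv t n) = 0 \<Longrightarrow> s = t \<and> m = n"
  proof -
    fix x s t m n assume a: "x \<noteq> 0" "m \<le> 2*k+1" "n \<le> 2*k+1"
      "cinner2 x (bv s m) = 0" "cinner2 x (bv t n) = 0"
    have nrm: "norm (cinner2 (bv s m) (bv t n)) = 1"
      using uniq_core[OF a(1) a(4) a(5) unit[OF a(2)] unit[OF a(3)]] .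
    show "s = t \<and> m = n"
    proof (cases "m = n")
      case True
      thus ?thesis using nrm Z[OF a(2) a(3), of s t] by auto
    next
      case False
      thus ?thesis using nrm gen[OF a(2) a(3) False] by (cases s; cases t) (auto simp: bv_def)
    qed
  qed
  have V: "\<And>i. vvec k b bp i = tensor (bv (even i) (i div 2)) (bv (odd i) (sv i))"
    by (simp add: vvec_def bv_def sv_def N_def)
  have W: "\<And>i. wvec k b bp i = tensor (bv (odd i) (i div 2)) (bv (odd i) (sw i))"
    by (simp add: wvec_def bv_def sw_def N_def)
  have rd: "\<And>i. i \<le> 2*k+1 \<Longrightarrow> i div 2 \<le> 2*k+1" by simp
  have rsv: "\<And>i. i \<le> 2*k+1 \<Longrightarrow> sv i \<le> 2*k+1" unfolding sv_def N_def
    by (simp add: mod1)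
  have rsw: "\<And>i. i \<le> 2*k+1 \<Longrightarrow> sw i \<le> 2*k+1" unfolding sw_def N_def
    by (auto simp add: mod2)
  have svE: "\<And>i. i \<le> 2*k+1 \<Longrightarrow> sv i = SVf k i"
    unfolding sv_def N_def SVf_def using mod1 by auto
  have swE: "\<And>i. i \<le> 2*k+1 \<Longrightarrow> sw i = SWf k i"
    unfolding sw_def N_def SWf_def using mod2 by auto
  have partA: "\<forall>i j. i \<le> 2*k+1 \<longrightarrow> j \<le> 2*k+1 \<longrightarrow>
            (orth4 (vvec k b bp i) (vvec k b bp j) \<longleftrightarrow>
               (int j - int i) mod (2*int k+2) \<in> {1, 2*int k+1}) \<and>
            (orth4 (wvec k b bp i) (wvec k b bp j) \<longleftrightarrow>
               (int j - int i) mod (2*int k+2) \<in> {1, 2*int k+1}) \<and>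
            (orth4 (vvec k b bp i) (wvec k b bp j) \<longleftrightarrow> i = j)"
  proof (intro allI impI)
    fix i j assume ij: "i \<le> 2*k+1" "j \<le> 2*k+1"
    have o1: "orth4 (vvec k b bp i) (vvec k b bp j) \<longleftrightarrow>
       (even i \<noteq> even j \<and> i div 2 = j div 2) \<or> (odd i \<noteq> odd j \<and> sv i = sv j)"
      unfolding V orth_tt using Z rd rsv ij by auto
    have o2: "orth4 (wvec k b bp i) (wvec k b bp j) \<longleftrightarrow>
       (odd i \<noteq> odd j \<and> i div 2 = j div 2) \<or> (odd i \<noteq> odd j \<and> sw i = sw j)"
      unfolding W orth_tt using Z rd rsw ij by auto
    have o3: "orth4 (vvec k b bp i) (wvec k b bp j) \<longleftrightarrow>
       (even i \<noteq> odd j \<and> i div 2 = j div 2) \<or> (odd i \<noteq> odd j \<and> sv i = sw j)"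
      unfolding V W orth_tt using Z rd rsv rsw ij by auto
    show "(orth4 (vvec k b bp i) (vvec k b bp j) \<longleftrightarrow>
               (int j - int i) mod (2*int k+2) \<in> {1, 2*int k+1}) \<and>
            (orth4 (wvec k b bp i) (wvec k b bp j) \<longleftrightarrow>
               (int j - int i) mod (2*int k+2) \<in> {1, 2*int k+1}) \<and>
            (orth4 (vvec k b bp i) (wvec k b bp j) \<longleftrightarrow> i = j)"
      unfolding o1 o2 o3 mod_int_char[OF ij] svE[OF ij(1)] svE[OF ij(2)] swE[OF ij(1)] swE[OF ij(2)]
      using arith1[OF ij k] arith2[OF ij k] arith3[OF ij k] by blast
  qed
  have partB: "\<forall>x y. tensor x y \<noteq> 0 \<longrightarrow>
            card {i. i \<le> 2*k+1 \<and> orth4 (tensor x y) (vvec k b bp i)}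
          + card {i. i \<le> 2*k+1 \<and> orth4 (tensor x y) (wvec k b bp i)} \<le> 3"
  proof (intro allI impI)
    fix x y assume "tensor x y \<noteq> 0"
    hence x0: "x \<noteq> 0" and y0: "y \<noteq> 0" using tensor_nz by auto
    define FV where "FV = {i. i \<le> 2*k+1 \<and> cinner2 x (bv (even i) (i div 2)) = 0}"
    define SV where "SV = {i. i \<le> 2*k+1 \<and> cinner2 y (bv (odd i) (sv i)) = 0}"
    define FW where "FW = {i. i \<le> 2*k+1 \<and> cinner2 x (bv (odd i) (i div 2)) = 0}"
    define SW where "SW = {i. i \<le> 2*k+1 \<and> cinner2 y (bv (odd i) (sw i)) = 0}"
    have fin: "finite FV" "finite SV" "finite FW" "finite SW"
      unfolding FV_def SV_def FW_def SW_def by auto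
    have e1: "{i. i \<le> 2*k+1 \<and> orth4 (tensor x y) (vvec k b bp i)} = FV \<union> SV"
      unfolding FV_def SV_def V orth_tt by auto
    have e2: "{i. i \<le> 2*k+1 \<and> orth4 (tensor x y) (wvec k b bp i)} = FW \<union> SW"
      unfolding FW_def SW_def W orth_tt by auto
    have c1: "card FV \<le> 1"
    proof -
      have "\<forall>a\<in>FV. \<forall>c\<in>FV. a = c"
      proof (intro ballI)
        fix a c assume "a \<in> FV" "c \<in> FV"
        hence "a \<le> 2*k+1" "c \<le> 2*k+1" "even a = even c \<and> a div 2 = c div 2"
          using U[OF x0 rd rd] unfolding FV_def by auto
        thus "a = c" using arith4 by blast
      qed
      thus ?thesis using card_le_Suc0_iff_eq[OF fin(1)] by simp
    qed
    have c2: "card FW \<le> 1"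
    proof -
      have "\<forall>a\<in>FW. \<forall>c\<in>FW. a = c"
      proof (intro ballI)
        fix a c assume "a \<in> FW" "c \<in> FW"
        hence "a \<le> 2*k+1" "c \<le> 2*k+1" "odd a = odd c \<and> a div 2 = c div 2"
          using U[OF x0 rd rd] unfolding FW_def by auto
        thus "a = c" using arith4 by blast
      qed
      thus ?thesis using card_le_Suc0_iff_eq[OF fin(3)] by simp
    qed
    have c3: "card SV \<le> 1"
    proof -
      have "\<forall>a\<in>SV. \<forall>c\<in>SV. a = c"
      proof (intro ballI)
        fix a c assume "a \<in> SV" "c \<in> SV"
        hence r: "a \<le> 2*k+1" "c \<le> 2*k+1" and "odd a = odd c \<and> sv a = sv c"
          using U[OF y0 rsv rsv] unfolding SV_def by auto
        thus "a = c" unfolding svE[OF r(1)] svE[OF r(2)] using arith5[OF r] by blast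
      qed
      thus ?thesis using card_le_Suc0_iff_eq[OF fin(2)] by simp
    qed
    have c4: "card SW \<le> 1"
    proof -
      have "\<forall>a\<in>SW. \<forall>c\<in>SW. a = c"
      proof (intro ballI)
        fix a c assume "a \<in> SW" "c \<in> SW"
        hence r: "a \<le> 2*k+1" "c \<le> 2*k+1" and "odd a = odd c \<and> sw a = sw c"
          using U[OF y0 rsw rsw] unfolding SW_def by auto
        thus "a = c" unfolding swE[OF r(1)] swE[OF r(2)] using arith6[OF r] by blast
      qed
      thus ?thesis using card_le_Suc0_iff_eq[OF fin(4)] by simp
    qed
    have c5: "SV = {} \<or> SW = {}"
    proof (rule ccontr)
      assume "\<not> (SV = {} \<or> SW = {})"
      then obtain a c where "a \<in> SV" "c \<in> SW" by auto
      hence r: "a \<le> 2*k+1" "c \<le> 2*k+1" and "odd a = odd c \<and> sv a = sw c"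
        using U[OF y0 rsv rsw] unfolding SV_def SW_def by auto
      thus False unfolding svE[OF r(1)] swE[OF r(2)] using arith7[OF r] by blast
    qed
    have "card SV + card SW \<le> 1" using c3 c4 c5 by auto
    moreover have "card (FV \<union> SV) \<le> card FV + card SV" by (rule card_Un_le)
    moreover have "card (FW \<union> SW) \<le> card FW + card SW" by (rule card_Un_le)
    ultimately show "card {i. i \<le> 2*k+1 \<and> orth4 (tensor x y) (vvec k b bp i)}
          + card {i. i \<le> 2*k+1 \<and> orth4 (tensor x y) (wvec k b bp i)} \<le> 3"
      unfolding e1 e2 using c1 c2 by linarith
  qed
  show ?thesis using partA partB by blast
qed

end
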